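(* Let $3\le p<5$. Let $u$ be a radial function in $\dot H^1(\mathbb{R}^3)$ and set $w(r)=r\,u(r)$ for $r>0$ (where $u(r)$ denotes the value of $u(x)$ at $|x|=r$). Then for every $R>0$, \[ |w(R)|\lesssim_p R^{\frac{p-1}{p+3}}\left(\int_0^R|w_r(r)|^2dr\right)^{\frac1{p+3}}\left(\int_0^R\frac{|w(r)|^{p+1}}{r^{p-1}}dr\right)^{\frac1{p+3}}. \]
   Context: $A\lesssim_p B$ means $A\le cB$ for a constant $c$ depending only on $p$. (In the paper this is applied at each fixed time $t$ to $w(r,t)=ru(r,t)$.) *)

theory Defs
  imports "HOL-Analysis.Analysis"
begin

text \<open>A radial function u(x) = f(|x|) in the homogeneous Sobolev space \<open>\<dot>H\<^sup>1(\<real>\<^sup>3)\<close>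
  is described through its (continuous representative) radial profile \<open>f\<close> on \<open>(0,\<infinity>)\<close>:
  \<open>f\<close> is locally absolutely continuous on \<open>(0,\<infinity>)\<close> with (a.e.) derivative \<open>f'\<close>,
  the Dirichlet energy \<open>\<integral>|\<nabla>u|\<^sup>2 = 4\<pi> \<integral>\<^sub>0\<^sup>\<infinity> r\<^sup>2 f'(r)\<^sup>2 dr\<close> is finite, and
  \<open>f(r) \<rightarrow> 0\<close> as \<open>r \<rightarrow> \<infinity>\<close> (the decay encoded in \<open>\<dot>H\<^sup>1\<close>, i.e. no nonzero constants).\<close>

definition radial_Hdot1_profile :: "(real \<Rightarrow> real) \<Rightarrow> (real \<Rightarrow> real) \<Rightarrow> bool" where
  "radial_Hdot1_profile f f' \<longleftrightarrow>
     (\<forall>a b. 0 < a \<longrightarrow> a \<le> b \<longrightarrow> (f' has_integral (f b - f a)) {a..b}) \<and>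
     (\<lambda>r. r\<^sup>2 * (f' r)\<^sup>2) integrable_on {0<..} \<and>
     (f \<longlongrightarrow> 0) at_top"

end

theory Submission
  imports Defs
begin
lemma sf_leb: "sigma_finite_measure (lebesgue :: real measure)"
proof
  show "\<exists>A::real set set. countable A \<and> A \<subseteq> sets lebesgue \<and> \<Union>A = space lebesgue \<and> (\<forall>a\<in>A. emeasure lebesgue a \<noteq> \<infinity>)"
  proof (rule exI[of _ "range (\<lambda>n::nat. {-real n..real n})"], auto simp: emeasure_lborel_cbox_eq)
    fix x :: real
    obtain n where "\<bar>x\<bar> \<le> real n" using real_arch_simple by blast
    then show "\<exists>n. - real n \<le> x \<and> x \<le> real n" by (intro exI[of _ n]) auto
  qed
qed

lemma fub:
  fixes P Q :: "real \<Rightarrow> real"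
  assumes P: "integrable lebesgue P" and Q: "integrable lebesgue Q"
  shows "(\<integral>s. P s * (\<integral>t. indicator {..s} t * Q t \<partial>lebesgue) \<partial>lebesgue)
       + (\<integral>t. Q t * (\<integral>s. indicator {..<t} s * P s \<partial>lebesgue) \<partial>lebesgue)
       = (\<integral>s. P s \<partial>lebesgue) * (\<integral>t. Q t \<partial>lebesgue)"
proof -
  interpret L: sigma_finite_measure "lebesgue :: real measure" by (rule sf_leb)
  interpret pair_sigma_finite "lebesgue :: real measure" "lebesgue :: real measure"
    by (intro pair_sigma_finite.intro sf_leb)
  have Pm[measurable]: "P \<in> borel_measurable lebesgue" using P by auto
  have Qm[measurable]: "Q \<in> borel_measurable lebesgue" using Q by auto
  have fstm[measurable]: "(\<lambda>x::real\<times>real. fst x) \<in> borel_measurable (lebesgue \<Otimes>\<^sub>M lebesgue)"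
    by (rule measurable_compose[OF measurable_fst]) (simp add: measurable_completion)
  have sndm[measurable]: "(\<lambda>x::real\<times>real. snd x) \<in> borel_measurable (lebesgue \<Otimes>\<^sub>M lebesgue)"
    by (rule measurable_compose[OF measurable_snd]) (simp add: measurable_completion)
  have Hint: "integrable (lebesgue \<Otimes>\<^sub>M lebesgue) (\<lambda>(s,t). P s * Q t)"
  proof (rule Fubini_integrable)
    show "(\<lambda>(s,t). P s * Q t) \<in> borel_measurable (lebesgue \<Otimes>\<^sub>M lebesgue)" by measurable
    show "integrable lebesgue (\<lambda>x. \<integral>y. norm (case (x, y) of (s, t) \<Rightarrow> P s * Q t) \<partial>lebesgue)"
      by (simp add: abs_mult P integrable_abs)
    show "AE x in lebesgue. integrable lebesgue (\<lambda>y. case (x, y) of (s, t) \<Rightarrow> P s * Q t)"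
      using Q by simp
  qed
  define H1 where "H1 = (\<lambda>s t. P s * (indicator {..s} t * Q t))"
  define H2 where "H2 = (\<lambda>s t. Q t * (indicator {..<t} s * P s))"
  have eq1: "(\<lambda>(s::real,t). indicator {..s} t :: real) = indicator {w \<in> space (lebesgue \<Otimes>\<^sub>M lebesgue). snd w \<le> fst w}"
    by (auto simp: indicator_def space_pair_measure fun_eq_iff)
  have ind1[measurable]: "(\<lambda>(s::real,t). indicator {..s} t :: real) \<in> borel_measurable (lebesgue \<Otimes>\<^sub>M lebesgue)"
    unfolding eq1 by (intro borel_measurable_indicator borel_measurable_le[OF sndm fstm])
  have eq2: "(\<lambda>(s::real,t). indicator {..<t} s :: real) = indicator {w \<in> space (lebesgue \<Otimes>\<^sub>M lebesgue). fst w < snd w}"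
    by (auto simp: indicator_def space_pair_measure fun_eq_iff)
  have ind2[measurable]: "(\<lambda>(s::real,t). indicator {..<t} s :: real) \<in> borel_measurable (lebesgue \<Otimes>\<^sub>M lebesgue)"
    unfolding eq2 by (intro borel_measurable_indicator borel_measurable_less[OF fstm sndm])
  have H1int: "integrable (lebesgue \<Otimes>\<^sub>M lebesgue) (case_prod H1)"
  proof (rule Bochner_Integration.integrable_bound[OF Hint])
    have "case_prod H1 = (\<lambda>x. (\<lambda>(s,t). P s * Q t) x * (\<lambda>(s::real,t). indicator {..s} t :: real) x)"
      by (auto simp: H1_def fun_eq_iff)
    then show "case_prod H1 \<in> borel_measurable (lebesgue \<Otimes>\<^sub>M lebesgue)" by simp
    show "AE x in lebesgue \<Otimes>\<^sub>M lebesgue. norm (case_prod H1 x) \<le> norm (case x of (s, t) \<Rightarrow> P s * Q t)"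
      by (auto simp: H1_def indicator_def abs_mult)
  qed
  have H2int: "integrable (lebesgue \<Otimes>\<^sub>M lebesgue) (case_prod H2)"
  proof (rule Bochner_Integration.integrable_bound[OF Hint])
    have "case_prod H2 = (\<lambda>x. (\<lambda>(s,t). P s * Q t) x * (\<lambda>(s::real,t). indicator {..<t} s :: real) x)"
      by (auto simp: H2_def fun_eq_iff)
    then show "case_prod H2 \<in> borel_measurable (lebesgue \<Otimes>\<^sub>M lebesgue)" by simp
    show "AE x in lebesgue \<Otimes>\<^sub>M lebesgue. norm (case_prod H2 x) \<le> norm (case x of (s, t) \<Rightarrow> P s * Q t)"
      by (auto simp: H2_def indicator_def abs_mult)
  qed
  have i1: "integrable lebesgue (H1 s)" for s
    unfolding H1_def using integrable_mult_indicator[OF _ Q] by (intro integrable_mult_right) auto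
  have H2eq: "H2 s = (\<lambda>t. P s * (indicator {s<..} t * Q t))" for s
    by (auto simp: H2_def fun_eq_iff indicator_def)
  have i2: "integrable lebesgue (H2 s)" for s
    unfolding H2eq using integrable_mult_indicator[OF _ Q] by (intro integrable_mult_right) auto
  have sum: "H1 s t + H2 s t = P s * Q t" for s t
    by (auto simp: H1_def H2_def indicator_def)
  have e1: "(\<integral>s. (\<integral>t. H1 s t \<partial>lebesgue) \<partial>lebesgue) = (\<integral>s. P s * (\<integral>t. indicator {..s} t * Q t \<partial>lebesgue) \<partial>lebesgue)"
    by (simp add: H1_def)
  have e2: "(\<integral>t. (\<integral>s. H2 s t \<partial>lebesgue) \<partial>lebesgue) = (\<integral>t. Q t * (\<integral>s. indicator {..<t} s * P s \<partial>lebesgue) \<partial>lebesgue)"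
    by (simp add: H2_def)
  have e3: "(\<integral>t. (\<integral>s. H2 s t \<partial>lebesgue) \<partial>lebesgue) = (\<integral>s. (\<integral>t. H2 s t \<partial>lebesgue) \<partial>lebesgue)"
    by (rule Fubini_integral[OF H2int])
  have e4: "(\<integral>s. (\<integral>t. H1 s t \<partial>lebesgue) \<partial>lebesgue) + (\<integral>s. (\<integral>t. H2 s t \<partial>lebesgue) \<partial>lebesgue)
      = (\<integral>s. (\<integral>t. H1 s t \<partial>lebesgue) + (\<integral>t. H2 s t \<partial>lebesgue) \<partial>lebesgue)"
    by (rule Bochner_Integration.integral_add[symmetric, OF integrable_fst[OF H1int] integrable_fst[OF H2int]])
  have e5: "(\<integral>t. H1 s t \<partial>lebesgue) + (\<integral>t. H2 s t \<partial>lebesgue) = P s * (\<integral>t. Q t \<partial>lebesgue)" for s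
    by (subst Bochner_Integration.integral_add[symmetric, OF i1 i2]) (simp add: sum)
  show ?thesis
    using e1 e2 e3 e4 e5 by simp
qed
lemma cont_prim:
  fixes g g' :: "real \<Rightarrow> real"
  assumes g': "g' integrable_on {a..b}" and g: "\<And>x. x \<in> {a..b} \<Longrightarrow> g x = g a + integral {a..x} g'"
  shows "continuous_on {a..b} g"
proof -
  have "continuous_on {a..b} (\<lambda>x. g a + integral {a..x} g')"
    by (intro continuous_intros indefinite_integral_continuous_1 g')
  then show ?thesis using continuous_on_cong g by (metis (no_types, lifting))
qed

lemma PR:
  fixes f g f' g' :: "real \<Rightarrow> real"
  assumes ab: "a \<le> b"
    and f': "f' absolutely_integrable_on {a..b}" and g': "g' absolutely_integrable_on {a..b}"
    and f: "\<And>x. x \<in> {a..b} \<Longrightarrow> f x = f a + integral {a..x} f'"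
    and g: "\<And>x. x \<in> {a..b} \<Longrightarrow> g x = g a + integral {a..x} g'"
  shows "((\<lambda>s. f' s * g s + f s * g' s) has_integral (f b * g b - f a * g a)) {a..b}"
proof -
  define P where "P = (\<lambda>s. indicator {a..b} s * f' s)"
  define Q where "Q = (\<lambda>s. indicator {a..b} s * g' s)"
  have Pi: "integrable lebesgue P" using f' by (simp add: P_def set_integrable_def)
  have Qi: "integrable lebesgue Q" using g' by (simp add: Q_def set_integrable_def)
  have f'i: "f' integrable_on {a..b}" and g'i: "g' integrable_on {a..b}"
    using f' g' set_lebesgue_integral_eq_integral(1) by auto
  have gc: "continuous_on {a..b} g" by (rule cont_prim[OF g'i g])
  have fc: "continuous_on {a..b} f" by (rule cont_prim[OF f'i f])
  have intP: "(\<integral>s. P s \<partial>lebesgue) = f b - f a"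
    using set_lebesgue_integral_eq_integral(2)[OF f'] f[of b] ab
    by (simp add: P_def set_lebesgue_integral_def)
  have intQ: "(\<integral>s. Q s \<partial>lebesgue) = g b - g a"
    using set_lebesgue_integral_eq_integral(2)[OF g'] g[of b] ab
    by (simp add: Q_def set_lebesgue_integral_def)
  have G: "(\<integral>t. indicator {..s} t * Q t \<partial>lebesgue) = g s - g a" if s: "s \<in> {a..b}" for s
  proof -
    have "(\<lambda>t. indicator {..s} t * Q t) = (\<lambda>t. indicator {a..s} t * g' t)"
      using s by (auto simp: Q_def indicator_def fun_eq_iff)
    moreover have "set_integrable lebesgue {a..s} g'"
      by (rule set_integrable_subset[OF g']) (use s in auto)
    ultimately show ?thesis
      using set_lebesgue_integral_eq_integral(2)[of "{a..s}" g'] g[OF s]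
      by (simp add: set_lebesgue_integral_def)
  qed
  have F: "(\<integral>s. indicator {..<t} s * P s \<partial>lebesgue) = f t - f a" if t: "t \<in> {a..b}" for t
  proof -
    have "(\<lambda>s. indicator {..<t} s * P s) = (\<lambda>s. indicator {a..<t} s * f' s)"
      using t by (auto simp: P_def indicator_def fun_eq_iff)
    moreover have "set_integrable lebesgue {a..<t} f'"
      by (rule set_integrable_subset[OF f']) (use t in auto)
    moreover have "integral {a..<t} f' = integral {a..t} f'"
      by (rule integral_spike_set; rule negligible_subset[OF negligible_sing[of t]]) auto
    ultimately show ?thesis
      using set_lebesgue_integral_eq_integral(2)[of "{a..<t}" f'] f[OF t]
      by (simp add: set_lebesgue_integral_def)
  qed
  have bnd: "bounded (h ` {a..b})" if "continuous_on {a..b} h" for h :: "real \<Rightarrow> real"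
    using compact_continuous_image[OF that compact_Icc] compact_imp_bounded by blast
  have A1: "(\<lambda>s. (g s - g a) * f' s) absolutely_integrable_on {a..b}"
    by (intro absolutely_integrable_bounded_measurable_product_real f' continuous_imp_measurable_on_sets_lebesgue bnd continuous_intros gc) auto
  have A2: "(\<lambda>s. (f s - f a) * g' s) absolutely_integrable_on {a..b}"
    by (intro absolutely_integrable_bounded_measurable_product_real g' continuous_imp_measurable_on_sets_lebesgue bnd continuous_intros fc) auto
  have L1: "(\<integral>s. P s * (\<integral>t. indicator {..s} t * Q t \<partial>lebesgue) \<partial>lebesgue) = integral {a..b} (\<lambda>s. (g s - g a) * f' s)"
  proof -
    have "(\<integral>s. P s * (\<integral>t. indicator {..s} t * Q t \<partial>lebesgue) \<partial>lebesgue) = (\<integral>s. indicator {a..b} s * ((g s - g a) * f' s) \<partial>lebesgue)"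
      by (rule Bochner_Integration.integral_cong) (auto simp: P_def G split: split_indicator)
    then show ?thesis
      using set_lebesgue_integral_eq_integral(2)[OF A1] by (simp add: set_lebesgue_integral_def)
  qed
  have L2: "(\<integral>t. Q t * (\<integral>s. indicator {..<t} s * P s \<partial>lebesgue) \<partial>lebesgue) = integral {a..b} (\<lambda>s. (f s - f a) * g' s)"
  proof -
    have "(\<integral>t. Q t * (\<integral>s. indicator {..<t} s * P s \<partial>lebesgue) \<partial>lebesgue) = (\<integral>s. indicator {a..b} s * ((f s - f a) * g' s) \<partial>lebesgue)"
      by (rule Bochner_Integration.integral_cong) (auto simp: Q_def F split: split_indicator)
    then show ?thesis
      using set_lebesgue_integral_eq_integral(2)[OF A2] by (simp add: set_lebesgue_integral_def)
  qed
  have main: "integral {a..b} (\<lambda>s. (g s - g a) * f' s) + integral {a..b} (\<lambda>s. (f s - f a) * g' s) = (f b - f a) * (g b - g a)"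
    using fub[OF Pi Qi] L1 L2 intP intQ by simp
  have h1: "((\<lambda>s. (g s - g a) * f' s) has_integral integral {a..b} (\<lambda>s. (g s - g a) * f' s)) {a..b}"
    using A1 set_lebesgue_integral_eq_integral(1) by blast
  have h2: "((\<lambda>s. (f s - f a) * g' s) has_integral integral {a..b} (\<lambda>s. (f s - f a) * g' s)) {a..b}"
    using A2 set_lebesgue_integral_eq_integral(1) by blast
  have h3: "((\<lambda>s. g a * f' s) has_integral g a * (f b - f a)) {a..b}"
    using has_integral_mult_right[OF integrable_integral[OF f'i], of "g a"] f[of b] ab by simp
  have h4: "((\<lambda>s. f a * g' s) has_integral f a * (g b - g a)) {a..b}"
    using has_integral_mult_right[OF integrable_integral[OF g'i], of "f a"] g[of b] ab by simp
  have "((\<lambda>s. ((g s - g a) * f' s + (f s - f a) * g' s) + (g a * f' s + f a * g' s)) has_integral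
     ((f b - f a) * (g b - g a) + (g a * (f b - f a) + f a * (g b - g a)))) {a..b}"
    using has_integral_add[OF has_integral_add[OF h1 h2] has_integral_add[OF h3 h4]] main by simp
  then show ?thesis
    by (simp add: algebra_simps)
qed
lemma CSaux:
  fixes x A B :: real
  assumes "0 \<le> A" "0 \<le> B" and le: "\<And>l. l > 0 \<Longrightarrow> x \<le> l * A + B / l"
  shows "x \<le> 2 * sqrt (A * B)"
proof (cases "A > 0 \<and> B > 0")
  case True
  define t where "t = sqrt (B / A)"
  have t0: "t > 0" using True by (simp add: t_def)
  have t2: "t\<^sup>2 = B / A" using True by (simp add: t_def)
  then have Bt: "B = t\<^sup>2 * A" using True by (simp add: field_simps)
  have "x \<le> t * A + B / t" using le t0 by simp
  also have "B / t = t * A" using Bt t0 by (simp add: power2_eq_square field_simps)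
  also have "t * A = sqrt (A * B)"
    by (rule real_sqrt_unique[symmetric]) (use Bt t0 True in \<open>auto simp: power2_eq_square algebra_simps\<close>)
  finally show ?thesis by simp
next
  case False
  then have "A = 0 \<or> B = 0" using assms by auto
  have "x \<le> e" if "e > 0" for e
  proof (cases "A = 0")
    case True
    have "x \<le> (B + 1) / e * A + B / ((B + 1) / e)"
      using le[of "(B + 1) / e"] that assms by simp
    also have "\<dots> = e * (B / (B + 1))" using True that assms by (simp add: field_simps)
    also have "\<dots> \<le> e * 1" using that assms by (intro mult_left_mono) auto
    finally show ?thesis by simp
  next
    case False
    then have "B = 0" using \<open>A = 0 \<or> B = 0\<close> by auto
    have "x \<le> e / (A + 1) * A + B / (e / (A + 1))"
      using le[of "e / (A + 1)"] that assms by simp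
    also have "\<dots> = e * (A / (A + 1))" using \<open>B = 0\<close> by simp
    also have "\<dots> \<le> e * 1" using that assms by (intro mult_left_mono) auto
    finally show ?thesis by simp
  qed
  then have "x \<le> 0" by (meson dense not_le)
  moreover have "0 \<le> sqrt (A * B)" using assms by simp
  ultimately show ?thesis by linarith
qed

definition Eu :: "(real \<Rightarrow> real) \<Rightarrow> real" where
  "Eu u' = integral {0<..} (\<lambda>r. r\<^sup>2 * (u' r)\<^sup>2)"

lemma sq_int:
  assumes H: "radial_Hdot1_profile u u'" and ab: "0 < a" "a \<le> b"
  shows "(\<lambda>r. r\<^sup>2 * (u' r)\<^sup>2) integrable_on {a..b}"
    and "integral {a..b} (\<lambda>r. r\<^sup>2 * (u' r)\<^sup>2) \<le> Eu u'"
proof -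
  have i: "(\<lambda>r. r\<^sup>2 * (u' r)\<^sup>2) integrable_on {0<..}" using H radial_Hdot1_profile_def by blast
  have "(\<lambda>r. r\<^sup>2 * (u' r)\<^sup>2) absolutely_integrable_on {0<..}"
    by (rule nonnegative_absolutely_integrable_1[OF i]) simp
  then have "(\<lambda>r. r\<^sup>2 * (u' r)\<^sup>2) absolutely_integrable_on {a..b}"
    by (rule set_integrable_subset) (use ab in auto)
  then show ii: "(\<lambda>r. r\<^sup>2 * (u' r)\<^sup>2) integrable_on {a..b}"
    using set_lebesgue_integral_eq_integral(1) by blast
  show "integral {a..b} (\<lambda>r. r\<^sup>2 * (u' r)\<^sup>2) \<le> Eu u'"
    unfolding Eu_def by (rule integral_subset_le[OF _ ii i]) (use ab in auto)
qed

lemma Eu_nonneg: "0 \<le> Eu u'"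
  unfolding Eu_def
  by (cases "(\<lambda>r. r\<^sup>2 * (u' r)\<^sup>2) integrable_on {0<..}")
     (auto intro: integral_nonneg simp: not_integrable_integral)

lemma u'_abs:
  assumes H: "radial_Hdot1_profile u u'" and ab: "0 < a" "a \<le> b"
  shows "u' absolutely_integrable_on {a..b}"
proof (rule measurable_bounded_by_integrable_imp_absolutely_integrable)
  have "(u' has_integral (u b - u a)) {a..b}" using H ab by (simp add: radial_Hdot1_profile_def)
  then show "u' \<in> borel_measurable (lebesgue_on {a..b})"
    by (intro integrable_imp_measurable) (auto simp: integrable_on_def)
  show "{a..b} \<in> sets lebesgue" by simp
  show "(\<lambda>r. (1 + r\<^sup>2 * (u' r)\<^sup>2) / (2 * a)) integrable_on {a..b}"
    by (intro integrable_on_divide integrable_add sq_int[OF H ab] integrable_on_const) auto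
  show "norm (u' x) \<le> (1 + x\<^sup>2 * (u' x)\<^sup>2) / (2 * a)" if x: "x \<in> {a..b}" for x
  proof -
    have "2 * (x * \<bar>u' x\<bar>) \<le> 1 + (x * \<bar>u' x\<bar>)\<^sup>2"
    proof -
      have "0 \<le> (x * \<bar>u' x\<bar> - 1)\<^sup>2" by simp
      then show ?thesis by (simp add: power2_eq_square algebra_simps)
    qed
    moreover have "a * \<bar>u' x\<bar> \<le> x * \<bar>u' x\<bar>" using x by (intro mult_right_mono) auto
    ultimately show ?thesis using ab by (simp add: field_simps power_mult_distrib)
  qed
qed
lemma inv_sq_integral:
  fixes r b :: real
  assumes "0 < r" "r \<le> b"
  shows "((\<lambda>s. 1 / s\<^sup>2) has_integral (1/r - 1/b)) {r..b}"
proof -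
  have "((\<lambda>s. 1 / s\<^sup>2) has_integral ((\<lambda>s. - 1 / s) b - (\<lambda>s. - 1 / s) r)) {r..b}"
  proof (rule fundamental_theorem_of_calculus[OF assms(2)])
    fix x assume x: "x \<in> {r..b}"
    then have "x \<noteq> 0" using assms by auto
    then have "((\<lambda>s. - 1 / s) has_real_derivative 1 / x\<^sup>2) (at x)"
      by (auto intro!: derivative_eq_intros simp: power2_eq_square)
    then show "((\<lambda>s. - 1 / s) has_vector_derivative 1 / x\<^sup>2) (at x within {r..b})"
      using has_real_derivative_iff_has_vector_derivative has_vector_derivative_at_within by blast
  qed
  then show ?thesis by simp
qed

lemma u_diff:
  assumes H: "radial_Hdot1_profile u u'" and rb: "0 < r" "r \<le> b"
  shows "\<bar>u b - u r\<bar> \<le> 2 * sqrt (Eu u' * (1 / r))"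
proof (rule CSaux[OF Eu_nonneg])
  show "0 \<le> 1 / r" using rb by simp
  fix l :: real assume l: "l > 0"
  have ui: "(u' has_integral (u b - u r)) {r..b}" using H rb by (simp add: radial_Hdot1_profile_def)
  have ua: "u' absolutely_integrable_on {r..b}" by (rule u'_abs[OF H rb])
  have ua1: "u' integrable_on {r..b}" and ua2: "(\<lambda>s. \<bar>u' s\<bar>) integrable_on {r..b}"
    using ua unfolding absolutely_integrable_on_def by auto
  have sqi: "(\<lambda>s. s\<^sup>2 * (u' s)\<^sup>2) integrable_on {r..b}" and sqle: "integral {r..b} (\<lambda>s. s\<^sup>2 * (u' s)\<^sup>2) \<le> Eu u'"
    using sq_int[OF H rb] by auto
  have ii: "((\<lambda>s. 1 / s\<^sup>2) has_integral (1/r - 1/b)) {r..b}" by (rule inv_sq_integral[OF rb])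
  have hsum: "((\<lambda>s. l * (s\<^sup>2 * (u' s)\<^sup>2) + (1 / l) * (1 / s\<^sup>2)) has_integral
     (l * integral {r..b} (\<lambda>s. s\<^sup>2 * (u' s)\<^sup>2) + (1 / l) * (1/r - 1/b))) {r..b}"
    by (intro has_integral_add has_integral_mult_right integrable_integral sqi ii)
  have "\<bar>u b - u r\<bar> = \<bar>integral {r..b} u'\<bar>" using ui by (simp add: integral_unique)
  also have "\<dots> \<le> integral {r..b} (\<lambda>s. \<bar>u' s\<bar>)"
    using integral_norm_bound_integral[OF ua1 ua2] by simp
  also have "\<dots> \<le> integral {r..b} (\<lambda>s. l * (s\<^sup>2 * (u' s)\<^sup>2) + (1 / l) * (1 / s\<^sup>2))"
  proof (rule integral_le)
    show "(\<lambda>s. \<bar>u' s\<bar>) integrable_on {r..b}" by (rule ua2)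
    show "(\<lambda>s. l * (s\<^sup>2 * (u' s)\<^sup>2) + (1 / l) * (1 / s\<^sup>2)) integrable_on {r..b}"
      using hsum by blast
    fix s assume s: "s \<in> {r..b}"
    then have sp: "s > 0" using rb by auto
    define c where "c = l * s\<^sup>2"
    have c0: "c > 0" using sp l by (simp add: c_def)
    have "0 \<le> (c * \<bar>u' s\<bar> - 1)\<^sup>2" by simp
    then have "2 * c * \<bar>u' s\<bar> \<le> c\<^sup>2 * (u' s)\<^sup>2 + 1"
      by (simp add: power2_eq_square algebra_simps)
    then have "c * (2 * \<bar>u' s\<bar>) \<le> c * (c * (u' s)\<^sup>2 + 1 / c)"
      using c0 by (simp add: power2_eq_square algebra_simps)
    then have "2 * \<bar>u' s\<bar> \<le> c * (u' s)\<^sup>2 + 1 / c"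
      using c0 by (simp only: mult_le_cancel_left_pos)
    moreover have "0 \<le> c * (u' s)\<^sup>2 + 1 / c" using c0 by simp
    moreover have "c * (u' s)\<^sup>2 + 1 / c = l * (s\<^sup>2 * (u' s)\<^sup>2) + (1 / l) * (1 / s\<^sup>2)"
      by (simp add: c_def)
    ultimately show "\<bar>u' s\<bar> \<le> l * (s\<^sup>2 * (u' s)\<^sup>2) + (1 / l) * (1 / s\<^sup>2)"
      by linarith
  qed
  also have "\<dots> = l * integral {r..b} (\<lambda>s. s\<^sup>2 * (u' s)\<^sup>2) + (1 / l) * (1/r - 1/b)"
    using hsum by (rule integral_unique)
  also have "\<dots> \<le> l * Eu u' + (1 / r) / l"
  proof (rule add_mono)
    show "l * integral {r..b} (\<lambda>s. s\<^sup>2 * (u' s)\<^sup>2) \<le> l * Eu u'"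
      using sqle l by (intro mult_left_mono) auto
    have "(1 / r - 1 / b) / l \<le> (1 / r) / l"
      using l rb by (intro divide_right_mono) auto
    then show "1 / l * (1 / r - 1 / b) \<le> 1 / r / l" by simp
  qed
  finally show "\<bar>u b - u r\<bar> \<le> l * Eu u' + (1 / r) / l" .
qed

lemma ubound:
  assumes H: "radial_Hdot1_profile u u'" and r: "0 < r"
  shows "r * (u r)\<^sup>2 \<le> 4 * Eu u'"
proof -
  have lim: "((\<lambda>b. (u b - u r)\<^sup>2) \<longlongrightarrow> (0 - u r)\<^sup>2) at_top"
    using H unfolding radial_Hdot1_profile_def by (intro tendsto_intros) auto
  have ev: "eventually (\<lambda>b. (u b - u r)\<^sup>2 \<le> 4 * (Eu u' * (1 / r))) at_top"
  proof (rule eventually_mono[OF eventually_ge_at_top[of r]])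
    fix b assume "r \<le> b"
    then have "\<bar>u b - u r\<bar> \<le> 2 * sqrt (Eu u' * (1 / r))" by (rule u_diff[OF H r])
    then have "\<bar>u b - u r\<bar>\<^sup>2 \<le> (2 * sqrt (Eu u' * (1 / r)))\<^sup>2"
      by (intro power_mono) auto
    also have "\<dots> = 4 * (Eu u' * (1 / r))"
      using Eu_nonneg r by (simp add: power_mult_distrib)
    finally show "(u b - u r)\<^sup>2 \<le> 4 * (Eu u' * (1 / r))" by simp
  qed
  have "(0 - u r)\<^sup>2 \<le> 4 * (Eu u' * (1 / r))"
    by (rule tendsto_upperbound[OF lim ev]) simp
  then have "r * (u r)\<^sup>2 \<le> r * (4 * (Eu u' * (1 / r)))"
    using r by (intro mult_left_mono) auto
  also have "\<dots> = 4 * Eu u'" using r by simp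
  finally show ?thesis .
qed
lemma u_prim:
  assumes H: "radial_Hdot1_profile u u'" and a: "0 < a" and x: "x \<in> {a..b}"
  shows "u x = u a + integral {a..x} u'"
proof -
  have "(u' has_integral (u x - u a)) {a..x}" using H a x by (simp add: radial_Hdot1_profile_def)
  then show ?thesis by (simp add: integral_unique)
qed

lemma u_cont_ab:
  assumes H: "radial_Hdot1_profile u u'" and a: "0 < a" "a \<le> b"
  shows "continuous_on {a..b} u"
  by (rule cont_prim[OF _ u_prim[OF H a(1)]])
     (use u'_abs[OF H a] set_lebesgue_integral_eq_integral(1) in blast)

lemma u_cont:
  assumes H: "radial_Hdot1_profile u u'"
  shows "continuous_on {0<..} u"
proof (rule continuous_at_imp_continuous_on, intro ballI)
  fix x :: real assume "x \<in> {0<..}"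
  then have x: "x > 0" by simp
  have "continuous_on {x/2..x+1} u" by (rule u_cont_ab[OF H]) (use x in auto)
  moreover have "x \<in> interior {x/2..x+1}" using x by simp
  ultimately show "isCont u x" by (rule continuous_on_interior)
qed

lemma w_prim:
  assumes H: "radial_Hdot1_profile u u'" and a: "0 < a" "a \<le> b"
  shows "((\<lambda>s. u s + s * u' s) has_integral (b * u b - a * u a)) {a..b}"
proof -
  have "((\<lambda>s. 1 * u s + id s * u' s) has_integral (id b * u b - id a * u a)) {a..b}"
  proof (rule PR[OF a(2)])
    show "(\<lambda>s. 1::real) absolutely_integrable_on {a..b}"
      by (rule absolutely_integrable_continuous_real) simp
    show "u' absolutely_integrable_on {a..b}" by (rule u'_abs[OF H a])
    show "id x = id a + integral {a..x} (\<lambda>s. 1)" if "x \<in> {a..b}" for x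
      using that by simp
    show "u x = u a + integral {a..x} u'" if "x \<in> {a..b}" for x
      by (rule u_prim[OF H a(1) that])
  qed
  then show ?thesis by simp
qed

lemma w'_abs:
  assumes H: "radial_Hdot1_profile u u'" and a: "0 < a" "a \<le> b"
  shows "(\<lambda>s. u s + s * u' s) absolutely_integrable_on {a..b}"
proof (rule set_integral_add)
  show "u absolutely_integrable_on {a..b}"
    by (rule absolutely_integrable_continuous_real[OF u_cont_ab[OF H a]])
  show "(\<lambda>s. s * u' s) absolutely_integrable_on {a..b}"
    by (intro absolutely_integrable_bounded_measurable_product_real u'_abs[OF H a]
        continuous_imp_measurable_on_sets_lebesgue continuous_intros)
       (auto intro: bounded_closed_interval)
qed

lemma wsq:
  assumes H: "radial_Hdot1_profile u u'" and a: "0 < a" "a \<le> b"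
  shows "((\<lambda>s. (u s + s * u' s)\<^sup>2) has_integral
           (b * (u b)\<^sup>2 - a * (u a)\<^sup>2 + integral {a..b} (\<lambda>s. s\<^sup>2 * (u' s)\<^sup>2))) {a..b}"
proof -
  have "((\<lambda>s. (u s + s * u' s) * u s + (s * u s) * u' s) has_integral ((b * u b) * u b - (a * u a) * u a)) {a..b}"
  proof (rule PR[OF a(2)])
    show "(\<lambda>s. u s + s * u' s) absolutely_integrable_on {a..b}" by (rule w'_abs[OF H a])
    show "u' absolutely_integrable_on {a..b}" by (rule u'_abs[OF H a])
    show "x * u x = a * u a + integral {a..x} (\<lambda>s. u s + s * u' s)" if "x \<in> {a..b}" for x
      using w_prim[OF H a(1), of x] that by (simp add: integral_unique)
    show "u x = u a + integral {a..x} u'" if "x \<in> {a..b}" for x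
      by (rule u_prim[OF H a(1) that])
  qed
  from has_integral_add[OF this integrable_integral[OF sq_int(1)[OF H a]]]
  show ?thesis
    by (simp add: power2_eq_square algebra_simps)
qed
lemma wsq_bound:
  assumes H: "radial_Hdot1_profile u u'" and a: "0 < a" "a \<le> b"
  shows "integral {a..b} (\<lambda>s. (u s + s * u' s)\<^sup>2) \<le> 5 * Eu u'"
proof -
  have "integral {a..b} (\<lambda>s. (u s + s * u' s)\<^sup>2) =
        b * (u b)\<^sup>2 - a * (u a)\<^sup>2 + integral {a..b} (\<lambda>s. s\<^sup>2 * (u' s)\<^sup>2)"
    by (rule integral_unique[OF wsq[OF H a]])
  moreover have "b * (u b)\<^sup>2 \<le> 4 * Eu u'" using ubound[OF H, of b] a by simp
  moreover have "0 \<le> a * (u a)\<^sup>2" using a by simp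
  moreover have "integral {a..b} (\<lambda>s. s\<^sup>2 * (u' s)\<^sup>2) \<le> Eu u'" by (rule sq_int(2)[OF H a])
  ultimately show ?thesis by linarith
qed

lemma w'_int0:
  assumes H: "radial_Hdot1_profile u u'" and R: "0 < R"
  shows "(\<lambda>s. (u s + s * u' s)\<^sup>2) integrable_on {0..R}"
proof -
  define h where "h = (\<lambda>s. (u s + s * u' s)\<^sup>2)"
  define T where "T = (\<lambda>k::nat. {R / real (Suc k)..R})"
  define f where "f = (\<lambda>k s. if s \<in> T k then h s else 0)"
  have TI: "T k \<inter> {0<..R} = T k" for k
  proof -
    have "0 < R / real (Suc k)" using R by simp
    then show ?thesis unfolding T_def by auto
  qed
  have hT: "h integrable_on T k" for k
    unfolding T_def h_def
    by (rule has_integral_integrable[OF wsq[OF H]]) (use R in \<open>auto simp: field_simps\<close>)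
  have mc: "h integrable_on {0<..R} \<and> ((\<lambda>k. integral {0<..R} (f k)) \<longlonglongrightarrow> integral {0<..R} h)"
  proof (rule monotone_convergence_increasing)
    show "f k integrable_on {0<..R}" for k
      unfolding f_def integrable_restrict_Int TI by (rule hT)
    show "f k x \<le> f (Suc k) x" if "x \<in> {0<..R}" for k x
    proof -
      have "R / real (Suc (Suc k)) \<le> R / real (Suc k)"
        using R by (intro divide_left_mono) auto
      then show ?thesis by (auto simp: f_def T_def h_def)
    qed
    show "(\<lambda>k. f k x) \<longlonglongrightarrow> h x" if x: "x \<in> {0<..R}" for x
    proof (rule tendsto_eventually)
      obtain n :: nat where n: "R / x < real n" using reals_Archimedean2 by blast
      show "\<forall>\<^sub>F k in sequentially. f k x = h x"
      proof (rule eventually_sequentiallyI[of n])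
        fix k assume "n \<le> k"
        then have "R / x < real (Suc k)" using n by linarith
        then have "R / real (Suc k) \<le> x" using x by (auto simp: field_simps)
        then show "f k x = h x" using x by (auto simp: f_def T_def)
      qed
    qed
    show "bounded (range (\<lambda>k. integral {0<..R} (f k)))"
    proof (rule boundedI)
      fix y assume "y \<in> range (\<lambda>k. integral {0<..R} (f k))"
      then obtain k where y: "y = integral (T k) h"
        by (auto simp: f_def integral_restrict_Int TI)
      have "0 \<le> integral (T k) h" by (rule integral_nonneg[OF hT]) (simp add: h_def)
      moreover have "integral (T k) h \<le> 5 * Eu u'"
        unfolding T_def h_def by (rule wsq_bound[OF H]) (use R in \<open>auto simp: field_simps\<close>)
      ultimately show "norm y \<le> 5 * Eu u'" using y by simp
    qed
  qed
  then have "h integrable_on {0<..R}" by blast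
  moreover have "negligible {x \<in> {0<..R} - {0..R}. h x \<noteq> 0}"
    by (rule negligible_subset[OF negligible_sing[of 0]]) auto
  moreover have "negligible {x \<in> {0..R} - {0<..R}. h x \<noteq> 0}"
    by (rule negligible_subset[OF negligible_sing[of 0]]) auto
  ultimately have "h integrable_on {0..R}"
    by (rule integrable_spike_set)
  then show ?thesis by (simp add: h_def)
qed
lemma A_int:
  fixes p :: real
  assumes H: "radial_Hdot1_profile u u'" and R: "0 < R" and p: "1 \<le> p" "p < 5"
  shows "(\<lambda>r. \<bar>r * u r\<bar> powr (p + 1) / r powr (p - 1)) integrable_on {0..R}"
proof -
  define h where "h = (\<lambda>r. \<bar>r * u r\<bar> powr (p + 1) / r powr (p - 1))"
  define K where "K = (4 * Eu u') powr ((p + 1) / 2)"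
  have bound: "norm (h r) \<le> K * r powr ((3 - p) / 2)" if r: "r \<in> {0<..R}" for r
  proof -
    have r0: "r > 0" using r by simp
    have hnn: "0 \<le> h r" by (simp add: h_def)
    have w2: "\<bar>r * u r\<bar>\<^sup>2 \<le> 4 * Eu u' * r"
    proof -
      have "\<bar>r * u r\<bar>\<^sup>2 = r * (r * (u r)\<^sup>2)" by (simp add: power2_eq_square)
      also have "\<dots> \<le> r * (4 * Eu u')" using ubound[OF H r0] r0 by (intro mult_left_mono) auto
      finally show ?thesis by (simp add: mult.commute)
    qed
    have "\<bar>r * u r\<bar> powr (p + 1) = (\<bar>r * u r\<bar>\<^sup>2) powr ((p + 1) / 2)"
    proof -
      have e1: "(\<bar>r * u r\<bar>\<^sup>2) powr ((p + 1) / 2) = (\<bar>r * u r\<bar> powr 2) powr ((p + 1) / 2)"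
        by simp
      have e2: "(\<bar>r * u r\<bar> powr 2) powr ((p + 1) / 2) = \<bar>r * u r\<bar> powr (2 * ((p + 1) / 2))"
        by (rule powr_powr)
      have e3: "2 * ((p + 1) / 2) = p + 1" by simp
      show ?thesis by (simp only: e1 e2 e3)
    qed
    also have "\<dots> \<le> (4 * Eu u' * r) powr ((p + 1) / 2)"
      by (rule powr_mono2) (use p w2 in auto)
    also have "\<dots> = K * r powr ((p + 1) / 2)" by (simp add: K_def powr_mult)
    finally have num: "\<bar>r * u r\<bar> powr (p + 1) \<le> K * r powr ((p + 1) / 2)" .
    have "h r \<le> K * r powr ((p + 1) / 2) / r powr (p - 1)"
      unfolding h_def using r0 num by (intro divide_right_mono) auto
    also have "\<dots> = K * r powr ((p + 1) / 2 - (p - 1))" by (simp add: powr_diff)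
    also have "(p + 1) / 2 - (p - 1) = (3 - p) / 2" by (simp add: field_simps)
    finally show ?thesis using hnn by simp
  qed
  have gi: "(\<lambda>r. K * r powr ((3 - p) / 2)) integrable_on {0<..R}"
  proof -
    have "(\<lambda>r. r powr ((3 - p) / 2)) integrable_on {0<..R}"
      by (rule integrable_on_powr_from_0') (use p R in auto)
    then show ?thesis
      using has_integral_mult_right[OF integrable_integral, of _ _ K] by blast
  qed
  have uc: "continuous_on {0<..R} u" by (rule continuous_on_subset[OF u_cont[OF H]]) auto
  have hc: "continuous_on {0<..R} h"
    unfolding h_def
    by (intro continuous_on_divide continuous_on_powr' continuous_intros uc) (use p in auto)
  have "h absolutely_integrable_on {0<..R}"
    by (rule measurable_bounded_by_integrable_imp_absolutely_integrable[OF
          continuous_imp_measurable_on_sets_lebesgue[OF hc] _ gi bound]) auto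
  then have "h integrable_on {0<..R}" using set_lebesgue_integral_eq_integral(1) by blast
  moreover have "negligible {x \<in> {0<..R} - {0..R}. h x \<noteq> 0}"
    by (rule negligible_subset[OF negligible_sing[of 0]]) auto
  moreover have "negligible {x \<in> {0..R} - {0<..R}. h x \<noteq> 0}"
    by (rule negligible_subset[OF negligible_sing[of 0]]) auto
  ultimately have "h integrable_on {0..R}"
    by (rule integrable_spike_set)
  then show ?thesis by (simp add: h_def)
qed
lemma core_final:
  fixes p W R A B :: real
  assumes p: "1 \<le> p" and R: "0 < R" and W: "0 < W" and A: "0 \<le> A" and B: "0 \<le> B"
    and key: "W powr (p + 3) \<le> 4 powr (p + 3) * R powr (p - 1) * B * A"
  shows "W \<le> 4 * R powr ((p - 1) / (p + 3)) * B powr (1 / (p + 3)) * A powr (1 / (p + 3))"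
proof -
  have q: "p + 3 > 0" using p by simp
  have "W = (W powr (p + 3)) powr (1 / (p + 3))"
    using W q by (simp add: powr_powr)
  also have "\<dots> \<le> (4 powr (p + 3) * R powr (p - 1) * B * A) powr (1 / (p + 3))"
    by (rule powr_mono2) (use key q W in auto)
  also have "\<dots> = (4 powr (p + 3)) powr (1 / (p + 3)) * (R powr (p - 1)) powr (1 / (p + 3))
                 * B powr (1 / (p + 3)) * A powr (1 / (p + 3))"
    using A B by (simp add: powr_mult)
  also have "(4 powr (p + 3)) powr (1 / (p + 3)) = (4::real)"
    using q by (simp add: powr_powr)
  also have "(R powr (p - 1)) powr (1 / (p + 3)) = R powr ((p - 1) / (p + 3))"
    by (simp add: powr_powr)
  finally show ?thesis .
qed

lemma core:
  fixes p R A B E :: real and w h :: "real \<Rightarrow> real"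
  assumes p: "1 \<le> p" and R: "0 < R" and W: "0 < \<bar>w R\<bar>"
    and F1: "\<And>r. r \<in> {0<..R} \<Longrightarrow> (w R - w r)\<^sup>2 \<le> 4 * B * (R - r)"
    and F2: "\<And>r. r \<in> {0<..R} \<Longrightarrow> (w r)\<^sup>2 \<le> 4 * E * r"
    and F3: "\<And>r0 c. r0 \<in> {0<..R} \<Longrightarrow> (\<And>r. r \<in> {r0..R} \<Longrightarrow> c \<le> h r) \<Longrightarrow> (R - r0) * c \<le> A"
    and hdef: "\<And>r. r \<in> {0<..R} \<Longrightarrow> h r = \<bar>w r\<bar> powr (p + 1) / r powr (p - 1)"
    and A: "0 \<le> A" and B: "0 \<le> B" and E: "0 \<le> E"
  shows "\<bar>w R\<bar> \<le> 4 * R powr ((p - 1) / (p + 3)) * B powr (1 / (p + 3)) * A powr (1 / (p + 3))"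
proof -
  define W where "W = \<bar>w R\<bar>"
  have W0: "W > 0" using W by (simp add: W_def)
  have half: "W / 2 \<le> \<bar>w r\<bar>" if r: "r \<in> {0<..R}" and le: "4 * B * (R - r) \<le> W\<^sup>2 / 4" for r
  proof -
    have "(w R - w r)\<^sup>2 \<le> (W / 2)\<^sup>2" using F1[OF r] le by (simp add: power_divide)
    then have "\<bar>w R - w r\<bar> \<le> W / 2" using W0
      by (metis abs_le_square_iff abs_of_pos half_gt_zero power2_abs)
    then show ?thesis unfolding W_def by linarith
  qed
  have big: "W\<^sup>2 < 16 * B * R"
  proof (rule ccontr)
    assume "\<not> W\<^sup>2 < 16 * B * R"
    then have le: "16 * B * R \<le> W\<^sup>2" by simp
    define r where "r = min R (W\<^sup>2 / (32 * (E + 1)))"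
    have r0: "0 < r" using R W0 E by (simp add: r_def)
    have rR: "r \<le> R" by (simp add: r_def)
    have "4 * B * (R - r) \<le> 4 * B * R" using B r0 by (simp add: mult_left_mono)
    also have "\<dots> \<le> W\<^sup>2 / 4" using le by simp
    finally have "W / 2 \<le> \<bar>w r\<bar>" using half[of r] r0 rR by simp
    then have "(W / 2)\<^sup>2 \<le> (w r)\<^sup>2"
      by (metis W0 abs_le_square_iff abs_of_pos half_gt_zero)
    also have "\<dots> \<le> 4 * E * r" using F2[of r] r0 rR by simp
    also have "\<dots> \<le> 4 * E * (W\<^sup>2 / (32 * (E + 1)))"
      using E by (intro mult_left_mono) (auto simp: r_def)
    also have "\<dots> = (W\<^sup>2 / 8) * (E / (E + 1))" using E by (simp add: field_simps)
    also have "\<dots> < (W\<^sup>2 / 8) * 1"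
      using E W0 by (intro mult_strict_left_mono) auto
    finally show False by (simp add: power_divide)
  qed
  have B0: "B > 0" using big W0 R B
    by (metis less_eq_real_def mult_eq_0_iff mult_zero_left not_le zero_le_power2)
  define d where "d = W\<^sup>2 / (16 * B)"
  have d0: "0 < d" using W0 B0 by (simp add: d_def)
  have dR: "d < R" using big B0 by (simp add: d_def field_simps)
  define c where "c = (W / 2) powr (p + 1) / R powr (p - 1)"
  have hc: "c \<le> h r" if r: "r \<in> {R - d..R}" for r
  proof -
    have r': "r \<in> {0<..R}" using r dR by auto
    have "4 * B * (R - r) \<le> 4 * B * d" using r B by (intro mult_left_mono) auto
    also have "\<dots> = W\<^sup>2 / 4" using B0 by (simp add: d_def)
    finally have wr: "W / 2 \<le> \<bar>w r\<bar>" by (rule half[OF r'])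
    have "c \<le> \<bar>w r\<bar> powr (p + 1) / r powr (p - 1)"
      unfolding c_def
    proof (rule frac_le)
      show "0 \<le> \<bar>w r\<bar> powr (p + 1)" by simp
      show "(W / 2) powr (p + 1) \<le> \<bar>w r\<bar> powr (p + 1)"
        by (rule powr_mono2) (use p W0 wr in auto)
      show "0 < r powr (p - 1)" using r' by simp
      show "r powr (p - 1) \<le> R powr (p - 1)"
        by (rule powr_mono2) (use p r' in auto)
    qed
    then show ?thesis using hdef[OF r'] by simp
  qed
  have Ad: "d * c \<le> A" using F3[of "R - d" c] hc d0 dR by simp
  have key: "W powr (p + 3) \<le> 4 powr (p + 3) * R powr (p - 1) * B * A"
  proof -
    have Wp: "W powr (p + 3) = W\<^sup>2 * W powr (p + 1)"
    proof -
      have "W powr (p + 3) = W powr (2 + (p + 1))" by (simp add: add_ac)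
      also have "\<dots> = W powr 2 * W powr (p + 1)" by (rule powr_add)
      finally show ?thesis using W0 by simp
    qed
    have cW: "c = W powr (p + 1) / (2 powr (p + 1) * R powr (p - 1))"
      using W0 by (simp add: c_def powr_divide)
    have Rp: "R powr (p - 1) > 0" using R by simp
    have tp: "(2::real) powr (p + 1) > 0" by simp
    from Ad have "W\<^sup>2 * W powr (p + 1) \<le> A * (16 * B) * (2 powr (p + 1) * R powr (p - 1))"
      unfolding d_def cW using B0 Rp tp by (simp add: field_simps)
    also have "\<dots> = 2 powr (p + 5) * R powr (p - 1) * B * A"
    proof -
      have "(2::real) powr (p + 5) = 2 powr (4 + (p + 1))"
        by (rule arg_cong[where f="\<lambda>x. (2::real) powr x"]) simp
      also have "\<dots> = 2 powr 4 * 2 powr (p + 1)" by (rule powr_add)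
      finally have "(2::real) powr (p + 5) = 2 powr 4 * 2 powr (p + 1)" .
      then show ?thesis by simp
    qed
    also have "\<dots> \<le> 4 powr (p + 3) * R powr (p - 1) * B * A"
    proof -
      have "(4::real) powr (p + 3) = (2 powr 2) powr (p + 3)" by simp
      also have "\<dots> = 2 powr (2 * (p + 3))" by (rule powr_powr)
      also have "\<dots> \<ge> 2 powr (p + 5)" by (rule powr_mono) (use p in auto)
      finally show ?thesis using A B Rp by (intro mult_right_mono) auto
    qed
    finally show ?thesis using Wp by simp
  qed
  show ?thesis unfolding W_def[symmetric]
    by (rule core_final[OF p R W0 A B key])
qed

lemma F1_lem:
  assumes H: "radial_Hdot1_profile u u'" and r: "0 < r" "r \<le> R"
  shows "(R * u R - r * u r)\<^sup>2 \<le> 4 * integral {r..R} (\<lambda>s. (u s + s * u' s)\<^sup>2) * (R - r)"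
proof -
  define B' where "B' = integral {r..R} (\<lambda>s. (u s + s * u' s)\<^sup>2)"
  have sqi: "(\<lambda>s. (u s + s * u' s)\<^sup>2) integrable_on {r..R}"
    using wsq[OF H r] by blast
  have B'0: "0 \<le> B'" unfolding B'_def by (rule integral_nonneg[OF sqi]) simp
  have wa: "(\<lambda>s. u s + s * u' s) absolutely_integrable_on {r..R}" by (rule w'_abs[OF H r])
  have wa1: "(\<lambda>s. u s + s * u' s) integrable_on {r..R}"
    and wa2: "(\<lambda>s. \<bar>u s + s * u' s\<bar>) integrable_on {r..R}"
    using wa unfolding absolutely_integrable_on_def by auto
  have "\<bar>R * u R - r * u r\<bar> \<le> 2 * sqrt (B' * (R - r))"
  proof (rule CSaux[OF B'0])
    show "0 \<le> R - r" using r by simp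
    fix l :: real assume l: "0 < l"
    have hsum: "((\<lambda>s. l * (u s + s * u' s)\<^sup>2 + 1 / l) has_integral (l * B' + (R - r) / l)) {r..R}"
    proof -
      from has_integral_add[OF has_integral_mult_right[OF integrable_integral[OF sqi], of l]
          has_integral_const_real[of "1 / l" r R]]
      show ?thesis using r by (simp add: B'_def)
    qed
    have "\<bar>R * u R - r * u r\<bar> = \<bar>integral {r..R} (\<lambda>s. u s + s * u' s)\<bar>"
      using w_prim[OF H r] by (simp add: integral_unique)
    also have "\<dots> \<le> integral {r..R} (\<lambda>s. \<bar>u s + s * u' s\<bar>)"
      using integral_norm_bound_integral[OF wa1 wa2] by simp
    also have "\<dots> \<le> integral {r..R} (\<lambda>s. l * (u s + s * u' s)\<^sup>2 + 1 / l)"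
    proof (rule integral_le[OF wa2])
      show "(\<lambda>s. l * (u s + s * u' s)\<^sup>2 + 1 / l) integrable_on {r..R}" using hsum by blast
      fix s assume "s \<in> {r..R}"
      define x where "x = u s + s * u' s"
      have "0 \<le> (l * \<bar>x\<bar> - 1)\<^sup>2" by simp
      then have "l * (2 * \<bar>x\<bar>) \<le> l * (l * x\<^sup>2 + 1 / l)"
        using l by (simp add: power2_eq_square algebra_simps)
      then have "2 * \<bar>x\<bar> \<le> l * x\<^sup>2 + 1 / l"
        using l by (simp only: mult_le_cancel_left_pos)
      moreover have "0 \<le> l * x\<^sup>2 + 1 / l" using l by simp
      moreover have "0 \<le> \<bar>x\<bar>" by simp
      ultimately have "\<bar>x\<bar> \<le> l * x\<^sup>2 + 1 / l" by linarith
      then show "\<bar>u s + s * u' s\<bar> \<le> l * (u s + s * u' s)\<^sup>2 + 1 / l"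
        unfolding x_def .
    qed
    also have "\<dots> = l * B' + (R - r) / l" using hsum by (rule integral_unique)
    finally show "\<bar>R * u R - r * u r\<bar> \<le> l * B' + (R - r) / l" .
  qed
  then have "\<bar>R * u R - r * u r\<bar>\<^sup>2 \<le> (2 * sqrt (B' * (R - r)))\<^sup>2"
    by (intro power_mono) auto
  also have "\<dots> = 4 * B' * (R - r)" using B'0 r by (simp add: power_mult_distrib)
  finally show ?thesis by (simp add: B'_def)
qed

theorem lemma2p2:
  fixes p :: real
  assumes "3 \<le> p" and "p < 5"
  shows "\<exists>C>0. \<forall>u u' R. radial_Hdot1_profile u u' \<longrightarrow> R > 0 \<longrightarrow>
    \<bar>R * u R\<bar> \<le> C * R powr ((p - 1) / (p + 3))
      * (integral {0..R} (\<lambda>r. \<bar>u r + r * u' r\<bar>\<^sup>2)) powr (1 / (p + 3))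
      * (integral {0..R} (\<lambda>r. \<bar>r * u r\<bar> powr (p + 1) / r powr (p - 1))) powr (1 / (p + 3))"
proof (intro exI[of _ 4] conjI allI impI)
  show "(0::real) < 4" by simp
  fix u u' :: "real \<Rightarrow> real" and R :: real
  assume H: "radial_Hdot1_profile u u'" and R: "R > 0"
  have p1: "1 \<le> p" using assms by simp
  define w where "w = (\<lambda>r. r * u r)"
  define h where "h = (\<lambda>r. \<bar>r * u r\<bar> powr (p + 1) / r powr (p - 1))"
  define B where "B = integral {0..R} (\<lambda>r. \<bar>u r + r * u' r\<bar>\<^sup>2)"
  define A where "A = integral {0..R} h"
  have Bi: "(\<lambda>r. \<bar>u r + r * u' r\<bar>\<^sup>2) integrable_on {0..R}"
    using w'_int0[OF H R] by simp
  have Ai: "h integrable_on {0..R}" unfolding h_def by (rule A_int[OF H R p1 assms(2)])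
  have Beq: "B = integral {0..R} (\<lambda>s. (u s + s * u' s)\<^sup>2)" by (simp add: B_def)
  have B0: "0 \<le> B" unfolding B_def by (rule integral_nonneg[OF Bi]) simp
  have A0: "0 \<le> A" unfolding A_def by (rule integral_nonneg[OF Ai]) (simp add: h_def)
  show "\<bar>R * u R\<bar> \<le> 4 * R powr ((p - 1) / (p + 3)) * B powr (1 / (p + 3)) * A powr (1 / (p + 3))"
  proof (cases "w R = 0")
    case True
    have "0 \<le> 4 * R powr ((p - 1) / (p + 3)) * B powr (1 / (p + 3)) * A powr (1 / (p + 3))"
      using B0 A0 by simp
    moreover have "\<bar>R * u R\<bar> = 0" using True by (simp add: w_def)
    ultimately show ?thesis by linarith
  next
    case False
    have "\<bar>w R\<bar> \<le> 4 * R powr ((p - 1) / (p + 3)) * B powr (1 / (p + 3)) * A powr (1 / (p + 3))"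
    proof (rule core[OF p1 R _ _ _ _ _ A0 B0 Eu_nonneg])
      show "0 < \<bar>w R\<bar>" using False by simp
      show "(w R - w r)\<^sup>2 \<le> 4 * B * (R - r)" if r: "r \<in> {0<..R}" for r
      proof -
        have r': "0 < r" "r \<le> R" using r by auto
        have sub: "integral {r..R} (\<lambda>s. (u s + s * u' s)\<^sup>2) \<le> B"
          unfolding Beq
          by (rule integral_subset_le) (use r' wsq[OF H r'] w'_int0[OF H R] in auto)
        have "(w R - w r)\<^sup>2 \<le> 4 * integral {r..R} (\<lambda>s. (u s + s * u' s)\<^sup>2) * (R - r)"
          unfolding w_def by (rule F1_lem[OF H r'])
        also have "\<dots> \<le> 4 * B * (R - r)"
          using sub r' by (intro mult_right_mono) auto
        finally show ?thesis .
      qed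
      show "(w r)\<^sup>2 \<le> 4 * Eu u' * r" if r: "r \<in> {0<..R}" for r
      proof -
        have r0: "0 < r" using r by simp
        have "(w r)\<^sup>2 = r * (r * (u r)\<^sup>2)" by (simp add: w_def power2_eq_square)
        also have "\<dots> \<le> r * (4 * Eu u')" using ubound[OF H r0] r0 by (intro mult_left_mono) auto
        finally show ?thesis by (simp add: mult.commute)
      qed
      show "(R - r0) * c \<le> A" if r0: "r0 \<in> {0<..R}" and c: "\<And>r. r \<in> {r0..R} \<Longrightarrow> c \<le> h r" for r0 c
      proof -
        have hi: "h integrable_on {r0..R}" by (rule integrable_on_subinterval[OF Ai]) (use r0 in auto)
        have "(R - r0) * c = integral {r0..R} (\<lambda>r. c)" using r0 by simp
        also have "\<dots> \<le> integral {r0..R} h"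
          by (rule integral_le[OF _ hi c]) (use has_integral_const_real in blast)+
        also have "\<dots> \<le> A"
          unfolding A_def by (rule integral_subset_le[OF _ hi Ai]) (use r0 in \<open>auto simp: h_def\<close>)
        finally show ?thesis .
      qed
      show "h r = \<bar>w r\<bar> powr (p + 1) / r powr (p - 1)" for r
        by (simp add: h_def w_def)
    qed
    then show ?thesis by (simp add: w_def)
  qed
qed

end
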